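(* For all positive integers $m,n$, $$\sum_{\substack{w\in W_n\\ |w|\in[m]^n}}t^{\mathrm{bars}(w)}=\sum_{k=0}^{n-1}\binom{n-1}{k}t^k\sum_{u\in[m]^{n-k}}t^{\mathrm{des}(u)}.$$
   Context: A barred word of length $n$ over $\mathbb P$ is a word $w_1\cdots w_n$ of positive integers in which some letters carry a bar; $|w_i|$ is the letter without its bar, $|w|=|w_1|\cdots|w_n|$, and $\mathrm{bars}(w)$ is the number of barred letters. $W_n$ (banners) is the set of barred words of length $n$ such that (1) $w_n$ is unbarred, (2) for $i\in[n-1]$, if $|w_i|<|w_{i+1}|$ then $w_i$ is unbarred, (3) for $i\in[n-1]$, if $|w_i|>|w_{i+1}|$ then $w_i$ is barred. For a word $u$, $\mathrm{des}(u)=|\{i:u_i>u_{i+1}\}|$. $[m]=\{1,\dots,m\}$. *)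

theory Defs
  imports Main
begin

text \<open>A barred word is a list of pairs (letter, barred flag); letters are positive integers.\<close>
type_synonym bword = "(nat \<times> bool) list"

definition unbar :: "bword \<Rightarrow> nat list" where
  "unbar w = map fst w"

definition bars :: "bword \<Rightarrow> nat" where
  "bars w = length (filter snd w)"

definition banners :: "nat \<Rightarrow> bword set" where
  "banners n = {w. length w = n \<and> (\<forall>i<n. fst (w ! i) \<ge> 1)
      \<and> (n > 0 \<longrightarrow> \<not> snd (w ! (n - 1)))
      \<and> (\<forall>i. i + 1 < n \<longrightarrow> fst (w ! i) < fst (w ! (i + 1)) \<longrightarrow> \<not> snd (w ! i))
      \<and> (\<forall>i. i + 1 < n \<longrightarrow> fst (w ! i) > fst (w ! (i + 1)) \<longrightarrow> snd (w ! i))}"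

definition des :: "nat list \<Rightarrow> nat" where
  "des u = card {i. i + 1 < length u \<and> u ! i > u ! (i + 1)}"

definition words :: "nat \<Rightarrow> nat \<Rightarrow> nat list set" where
  "words m n = {u. length u = n \<and> set u \<subseteq> {1..m}}"

end

theory Submission
  imports Defs
begin

fun isb :: "bword \<Rightarrow> bool" where
"isb [] = True" | "isb [x] = (1 \<le> fst x \<and> \<not> snd x)" |
"isb (x#y#ws) = (1 \<le> fst x \<and> (fst x < fst y \<longrightarrow> \<not> snd x) \<and> (fst y < fst x \<longrightarrow> snd x) \<and> isb (y#ws))"

lemma banners_isb: "(w \<in> banners (length w)) = isb w"
proof (induction w rule: isb.induct)
  case 1 then show ?case by (simp add: banners_def)
next
  case (2 x) then show ?case by (auto simp add: banners_def)
next
  case (3 x y ws)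
  have "(x#y#ws) \<in> banners (length (x#y#ws)) \<longleftrightarrow>
     (1 \<le> fst x \<and> (fst x < fst y \<longrightarrow> \<not> snd x) \<and> (fst y < fst x \<longrightarrow> snd x)) \<and> (y#ws) \<in> banners (length (y#ws))"
  proof
    assume h: "(x#y#ws) \<in> banners (length (x#y#ws))"
    have a: "\<forall>i<Suc (Suc (length ws)). 1 \<le> fst ((x#y#ws) ! i)" using h by (simp add: banners_def)
    have b: "\<not> snd ((x#y#ws) ! (Suc (length ws)))" using h by (simp add: banners_def)
    have c: "\<forall>i. i + 1 < Suc (Suc (length ws)) \<longrightarrow> fst ((x#y#ws) ! i) < fst ((x#y#ws) ! (i + 1)) \<longrightarrow> \<not> snd ((x#y#ws) ! i)" using h by (simp add: banners_def)
    have d: "\<forall>i. i + 1 < Suc (Suc (length ws)) \<longrightarrow> fst ((x#y#ws) ! i) > fst ((x#y#ws) ! (i + 1)) \<longrightarrow> snd ((x#y#ws) ! i)" using h by (simp add: banners_def)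
    show "(1 \<le> fst x \<and> (fst x < fst y \<longrightarrow> \<not> snd x) \<and> (fst y < fst x \<longrightarrow> snd x)) \<and> (y#ws) \<in> banners (length (y#ws))"
    proof (intro conjI)
      show "1 \<le> fst x" using a[rule_format, of 0] by simp
      show "fst x < fst y \<longrightarrow> \<not> snd x" using c[rule_format, of 0] by simp
      show "fst y < fst x \<longrightarrow> snd x" using d[rule_format, of 0] by simp
      show "(y#ws) \<in> banners (length (y#ws))" unfolding banners_def
      proof (intro CollectI conjI allI impI)
        fix i assume "i < length (y#ws)" then show "1 \<le> fst ((y#ws) ! i)" using a[rule_format, of "Suc i"] by simp
      next
        show "\<not> snd ((y # ws) ! (length (y # ws) - 1))" using b by simp
      next
        fix i assume "i + 1 < length (y#ws)" "fst ((y # ws) ! i) < fst ((y # ws) ! (i + 1))"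
        then show "\<not> snd ((y # ws) ! i)" using c[rule_format, of "Suc i"] by simp
      next
        fix i assume "i + 1 < length (y#ws)" "fst ((y # ws) ! i) > fst ((y # ws) ! (i + 1))"
        then show "snd ((y # ws) ! i)" using d[rule_format, of "Suc i"] by simp
      qed simp
    qed
  next
    assume h: "(1 \<le> fst x \<and> (fst x < fst y \<longrightarrow> \<not> snd x) \<and> (fst y < fst x \<longrightarrow> snd x)) \<and> (y#ws) \<in> banners (length (y#ws))"
    have a: "\<forall>i<Suc (length ws). 1 \<le> fst ((y#ws) ! i)" using h by (simp add: banners_def)
    have b: "\<not> snd ((y#ws) ! (length ws))" using h by (simp add: banners_def)
    have c: "\<forall>i. i + 1 < Suc (length ws) \<longrightarrow> fst ((y#ws) ! i) < fst ((y#ws) ! (i + 1)) \<longrightarrow> \<not> snd ((y#ws) ! i)" using h by (simp add: banners_def)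
    have d: "\<forall>i. i + 1 < Suc (length ws) \<longrightarrow> fst ((y#ws) ! i) > fst ((y#ws) ! (i + 1)) \<longrightarrow> snd ((y#ws) ! i)" using h by (simp add: banners_def)
    show "(x#y#ws) \<in> banners (length (x#y#ws))" unfolding banners_def
    proof (intro CollectI conjI allI impI)
      fix i assume "i < length (x#y#ws)" then show "1 \<le> fst ((x#y#ws) ! i)" using a h by (cases i) auto
    next
      show "\<not> snd ((x#y # ws) ! (length (x#y # ws) - 1))" using b by simp
    next
      fix i assume "i + 1 < length (x#y#ws)" "fst ((x#y # ws) ! i) < fst ((x#y # ws) ! (i + 1))"
      then show "\<not> snd ((x#y # ws) ! i)" using c h by (cases i) auto
    next
      fix i assume "i + 1 < length (x#y#ws)" "fst ((x#y # ws) ! i) > fst ((x#y # ws) ! (i + 1))"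
      then show "snd ((x#y # ws) ! i)" using d h by (cases i) auto
    qed simp
  qed
  then show ?case using 3 by simp
qed

fun desr :: "nat list \<Rightarrow> nat" where
"desr [] = 0" | "desr [x] = 0" | "desr (x#y#ys) = (if y < x then 1 else 0) + desr (y#ys)"

lemma des_desr: "des u = desr u"
proof (induction u rule: desr.induct)
  case 1 then show ?case by (simp add: des_def)
next
  case (2 x) then show ?case by (simp add: des_def)
next
  case (3 x y ys)
  have e: "{i. i + 1 < length (x#y#ys) \<and> (x#y#ys) ! i > (x#y#ys) ! (i + 1)}
     = (if y < x then {0} else {}) \<union> Suc ` {i. i + 1 < length (y#ys) \<and> (y#ys) ! i > (y#ys) ! (i + 1)}"
    (is "?L = ?R")
  proof (rule set_eqI)
    fix i show "i \<in> ?L \<longleftrightarrow> i \<in> ?R" by (cases i) auto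
  qed
  have fin: "finite {i. i + 1 < length (y#ys) \<and> (y#ys) ! i > (y#ys) ! (i + 1)}" by simp
  have "des (x#y#ys) = (if y < x then 1 else 0) + des (y#ys)"
    unfolding des_def e using fin by (simp add: card_image)
  then show ?case using 3 by simp
qed

lemma bars_Cons: "bars (x#w) = (if snd x then 1 else 0) + bars w"
  by (simp add: bars_def)

definition wt :: "'a::comm_ring_1 \<Rightarrow> nat \<Rightarrow> nat \<Rightarrow> 'a" where
  "wt t a b = (if b < a then t else 1)"

fun Dd :: "'a::comm_ring_1 \<Rightarrow> nat \<Rightarrow> nat \<Rightarrow> nat \<Rightarrow> 'a" where
  "Dd t m 0 a = 1" | "Dd t m (Suc n) a = (\<Sum>b=1..m. wt t a b * Dd t m n b)"

fun Bb :: "'a::comm_ring_1 \<Rightarrow> nat \<Rightarrow> nat \<Rightarrow> nat \<Rightarrow> 'a" where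
  "Bb t m 0 a = 1" | "Bb t m (Suc n) a = t * Bb t m n a + (\<Sum>b=1..m. wt t a b * Bb t m n b)"

lemma Bb_Dd: "Bb t m n a = (\<Sum>k\<le>n. of_nat (n choose k) * t ^ k * Dd t m (n - k) a)"
proof (induction n arbitrary: a)
  case 0 then show ?case by simp
next
  case (Suc n)
  have "Bb t m (Suc n) a = (\<Sum>k\<le>n. of_nat (n choose k) * t ^ Suc k * Dd t m (n - k) a)
      + (\<Sum>k\<le>n. of_nat (n choose k) * t ^ k * Dd t m (Suc (n - k)) a)"
  proof -
    have "(\<Sum>b=1..m. wt t a b * Bb t m n b) = (\<Sum>b=1..m. \<Sum>k\<le>n. wt t a b * (of_nat (n choose k) * t ^ k * Dd t m (n - k) b))"
      by (simp add: Suc sum_distrib_left)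
    also have "\<dots> = (\<Sum>k\<le>n. \<Sum>b=1..m. wt t a b * (of_nat (n choose k) * t ^ k * Dd t m (n - k) b))"
      by (rule sum.swap)
    also have "\<dots> = (\<Sum>k\<le>n. of_nat (n choose k) * t ^ k * Dd t m (Suc (n - k)) a)"
      by (simp add: sum_distrib_left mult_ac)
    finally show ?thesis by (simp add: Suc sum_distrib_left mult_ac)
  qed
  also have "(\<Sum>k\<le>n. of_nat (n choose k) * t ^ k * Dd t m (Suc (n - k)) a)
      = Dd t m (Suc n) a + (\<Sum>k\<le>n. of_nat (n choose Suc k) * t ^ Suc k * Dd t m (n - k) a)"
  proof -
    have "(\<Sum>k\<le>Suc n. of_nat (n choose k) * t ^ k * Dd t m (Suc n - k) a)
       = Dd t m (Suc n) a + (\<Sum>k\<le>n. of_nat (n choose Suc k) * t ^ Suc k * Dd t m (n - k) a)"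
      by (subst sum.atMost_Suc_shift) (simp add: sum.atMost_Suc)
    moreover have "(\<Sum>k\<le>Suc n. of_nat (n choose k) * t ^ k * Dd t m (Suc n - k) a)
       = (\<Sum>k\<le>n. of_nat (n choose k) * t ^ k * Dd t m (Suc (n - k)) a)"
      by (simp add: Suc_diff_le sum.atMost_Suc binomial_eq_0)
    ultimately show ?thesis by simp
  qed
  also have "(\<Sum>k\<le>Suc n. of_nat (Suc n choose k) * t ^ k * Dd t m (Suc n - k) a)
      = Dd t m (Suc n) a + (\<Sum>k\<le>n. of_nat (n choose k) * t ^ Suc k * Dd t m (n - k) a)
        + (\<Sum>k\<le>n. of_nat (n choose Suc k) * t ^ Suc k * Dd t m (n - k) a)"
    by (subst sum.atMost_Suc_shift) (simp add: distrib_left distrib_right sum.distrib)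
  ultimately show ?case by (simp add: algebra_simps)
qed

definition SB :: "nat \<Rightarrow> nat \<Rightarrow> nat \<Rightarrow> bword set" where
  "SB m n a = {w. length w = Suc n \<and> isb w \<and> set (map fst w) \<subseteq> {1..m} \<and> fst (hd w) = a}"

definition okb :: "nat \<Rightarrow> nat \<Rightarrow> bool set" where
  "okb a b = {\<beta>. (a < b \<longrightarrow> \<not> \<beta>) \<and> (b < a \<longrightarrow> \<beta>)}"

lemma fin_SB: "finite (SB m n a)"
proof -
  have "SB m n a \<subseteq> {xs. set xs \<subseteq> {1..m} \<times> UNIV \<and> length xs = Suc n}"
    by (auto simp: SB_def)
  moreover have "finite {xs. set xs \<subseteq> ({1..m} \<times> (UNIV::bool set)) \<and> length xs = Suc n}"
    by (rule finite_lists_length_eq) simp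
  ultimately show ?thesis by (rule finite_subset)
qed

lemma SB_0: "a \<in> {1..m} \<Longrightarrow> SB m 0 a = {[(a, False)]}"
  by (auto simp: SB_def length_Suc_conv)

lemma SB_Suc: assumes "a \<in> {1..m}"
  shows "SB m (Suc n) a = (\<lambda>(b,\<beta>,w). (a,\<beta>)#w) ` (SIGMA b:{1..m}. okb a b \<times> SB m n b)"
proof
  show "SB m (Suc n) a \<subseteq> (\<lambda>(b,\<beta>,w). (a,\<beta>)#w) ` (SIGMA b:{1..m}. okb a b \<times> SB m n b)"
  proof
    fix w assume "w \<in> SB m (Suc n) a"
    then obtain x y ws where w: "w = x#y#ws" and h: "length ws = n" "isb (x#y#ws)"
       "set (map fst (x#y#ws)) \<subseteq> {1..m}" "fst x = a"
      by (auto simp: SB_def length_Suc_conv)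
    have "(fst y, snd x, y#ws) \<in> (SIGMA b:{1..m}. okb a b \<times> SB m n b)"
      using h by (auto simp: SB_def okb_def)
    moreover have "w = (\<lambda>(b,\<beta>,w). (a,\<beta>)#w) (fst y, snd x, y#ws)" using w h by (cases x) auto
    ultimately show "w \<in> (\<lambda>(b,\<beta>,w). (a,\<beta>)#w) ` (SIGMA b:{1..m}. okb a b \<times> SB m n b)" by blast
  qed
next
  show "(\<lambda>(b,\<beta>,w). (a,\<beta>)#w) ` (SIGMA b:{1..m}. okb a b \<times> SB m n b) \<subseteq> SB m (Suc n) a"
  proof clarify
    fix b \<beta> w assume "b \<in> {1..m}" "\<beta> \<in> okb a b" "w \<in> SB m n b"
    then show "(a,\<beta>)#w \<in> SB m (Suc n) a" using assms
      by (cases w) (auto simp: SB_def okb_def)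
  qed
qed

lemma sum_SB: "a \<in> {1..m} \<Longrightarrow> (\<Sum>w\<in>SB m n a. t ^ bars w) = Bb t m n a"
proof (induction n arbitrary: a)
  case 0 then show ?case by (simp add: SB_0 bars_def)
next
  case (Suc n)
  have inj: "inj_on (\<lambda>(b,\<beta>,w). (a,\<beta>)#w) (SIGMA b:{1..m}. okb a b \<times> SB m n b)"
    by (rule inj_onI) (auto simp: SB_def)
  have "(\<Sum>w\<in>SB m (Suc n) a. t ^ bars w)
     = (\<Sum>(b,\<beta>,w)\<in>(SIGMA b:{1..m}. okb a b \<times> SB m n b). t ^ bars ((a,\<beta>)#w))"
    unfolding SB_Suc[OF Suc.prems] by (subst sum.reindex[OF inj]) (simp add: case_prod_beta')
  also have "\<dots> = (\<Sum>b=1..m. \<Sum>(\<beta>,w)\<in>okb a b \<times> SB m n b. t ^ bars ((a,\<beta>)#w))"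
    by (subst sum.Sigma) (auto simp: fin_SB okb_def split_def)
  also have "\<dots> = (\<Sum>b=1..m. \<Sum>\<beta>\<in>okb a b. \<Sum>w\<in>SB m n b. t ^ bars ((a,\<beta>)#w))"
    by (simp add: sum.cartesian_product)
  also have "\<dots> = (\<Sum>b=1..m. \<Sum>\<beta>\<in>okb a b. \<Sum>w\<in>SB m n b. (if \<beta> then t else 1) * t ^ bars w)"
    by (intro sum.cong refl) (simp add: bars_Cons power_add)
  also have "\<dots> = (\<Sum>b=1..m. (if b = a then 1 + t else wt t a b) * Bb t m n b)"
  proof (rule sum.cong[OF refl])
    fix b assume b: "b \<in> {1..m}"
    have "(\<Sum>\<beta>\<in>okb a b. \<Sum>w\<in>SB m n b. (if \<beta> then t else 1) * t ^ bars w)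
        = (\<Sum>\<beta>\<in>okb a b. (if \<beta> then t else 1)) * Bb t m n b"
      by (simp add: sum_distrib_left[symmetric] sum_distrib_right Suc.IH[OF b])
    also have "(\<Sum>\<beta>\<in>okb a b. (if \<beta> then t else (1::'a))) = (if b = a then 1 + t else wt t a b)"
    proof -
      have "okb a b = (if a < b then {False} else if b < a then {True} else {False, True})"
        by (auto simp: okb_def)
      then show ?thesis by (auto simp: wt_def)
    qed
    finally show "(\<Sum>\<beta>\<in>okb a b. \<Sum>w\<in>SB m n b. (if \<beta> then t else 1) * t ^ bars w)
        = (if b = a then 1 + t else wt t a b) * Bb t m n b" .
  qed
  also have "\<dots> = t * Bb t m n a + (\<Sum>b=1..m. wt t a b * Bb t m n b)"
  proof -
    have "(\<Sum>b=1..m. (if b = a then 1 + t else wt t a b) * Bb t m n b)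
        = (\<Sum>b=1..m. wt t a b * Bb t m n b + (if b = a then t * Bb t m n b else 0))"
      by (rule sum.cong) (auto simp: wt_def algebra_simps)
    also have "\<dots> = (\<Sum>b=1..m. wt t a b * Bb t m n b) + t * Bb t m n a"
      using Suc.prems by (simp add: sum.distrib)
    finally show ?thesis by (simp add: add.commute)
  qed
  finally show ?case by simp
qed

definition SD :: "nat \<Rightarrow> nat \<Rightarrow> nat \<Rightarrow> nat list set" where
  "SD m n a = {u. length u = Suc n \<and> set u \<subseteq> {1..m} \<and> hd u = a}"

lemma fin_SD: "finite (SD m n a)"
proof -
  have "SD m n a \<subseteq> {xs. set xs \<subseteq> {1..m} \<and> length xs = Suc n}" by (auto simp: SD_def)
  moreover have "finite {xs. set xs \<subseteq> {1..m} \<and> length xs = Suc n}"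
    by (rule finite_lists_length_eq) simp
  ultimately show ?thesis by (rule finite_subset)
qed

lemma SD_Suc: assumes "a \<in> {1..m}"
  shows "SD m (Suc n) a = (\<lambda>(b,u). a#u) ` (SIGMA b:{1..m}. SD m n b)"
proof
  show "SD m (Suc n) a \<subseteq> (\<lambda>(b,u). a#u) ` (SIGMA b:{1..m}. SD m n b)"
  proof
    fix w assume "w \<in> SD m (Suc n) a"
    then obtain x y ws where w: "w = x#y#ws" and h: "length ws = n"
       "set (x#y#ws) \<subseteq> {1..m}" "x = a"
      by (auto simp: SD_def length_Suc_conv)
    have "(y, y#ws) \<in> (SIGMA b:{1..m}. SD m n b)" using h by (auto simp: SD_def)
    moreover have "w = (\<lambda>(b,u). a#u) (y, y#ws)" using w h by auto
    ultimately show "w \<in> (\<lambda>(b,u). a#u) ` (SIGMA b:{1..m}. SD m n b)" by blast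
  qed
next
  show "(\<lambda>(b,u). a#u) ` (SIGMA b:{1..m}. SD m n b) \<subseteq> SD m (Suc n) a"
    using assms by (auto simp: SD_def)
qed

lemma sum_SD: "a \<in> {1..m} \<Longrightarrow> (\<Sum>u\<in>SD m n a. t ^ des u) = Dd t m n a"
proof (induction n arbitrary: a)
  case 0
  then have "SD m 0 a = {[a]}" by (auto simp: SD_def length_Suc_conv)
  then show ?case by (simp add: des_desr)
next
  case (Suc n)
  have inj: "inj_on (\<lambda>(b,u). a#u) (SIGMA b:{1..m}. SD m n b)"
    by (rule inj_onI) (auto simp: SD_def)
  have "(\<Sum>u\<in>SD m (Suc n) a. t ^ des u) = (\<Sum>(b,u)\<in>(SIGMA b:{1..m}. SD m n b). t ^ des (a#u))"
    unfolding SD_Suc[OF Suc.prems] by (subst sum.reindex[OF inj]) (simp add: case_prod_beta')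
  also have "\<dots> = (\<Sum>b=1..m. \<Sum>u\<in>SD m n b. t ^ des (a#u))"
    by (subst sum.Sigma) (auto simp: fin_SD)
  also have "\<dots> = (\<Sum>b=1..m. \<Sum>u\<in>SD m n b. wt t a b * t ^ des u)"
  proof (intro sum.cong refl)
    fix b u assume "u \<in> SD m n b"
    then obtain us where u: "u = b#us" by (auto simp: SD_def length_Suc_conv)
    show "t ^ des (a#u) = wt t a b * t ^ des u" unfolding u des_desr by (simp add: wt_def power_add)
  qed
  also have "\<dots> = (\<Sum>b=1..m. wt t a b * Dd t m n b)"
    by (intro sum.cong refl) (simp add: sum_distrib_left[symmetric] Suc.IH)
  finally show ?case by simp
qed

lemma words_UN: "words m (Suc n) = (\<Union>a\<in>{1..m}. SD m n a)"
  by (auto simp: words_def SD_def length_Suc_conv)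

lemma sum_words: "(\<Sum>u\<in>words m (Suc n). t ^ des u) = (\<Sum>a=1..m. Dd t m n a)"
  unfolding words_UN
  apply (subst sum.UNION_disjoint)
  apply (simp_all add: fin_SD sum_SD)
  apply (auto simp: SD_def)
  done

lemma ban_UN: "{w\<in>banners (Suc n). set (unbar w) \<subseteq> {1..m}} = (\<Union>a\<in>{1..m}. SB m n a)"
proof -
  have "w \<in> banners (Suc n) \<longleftrightarrow> length w = Suc n \<and> isb w" for w
    using banners_isb[of w] by (auto simp: banners_def)
  then show ?thesis by (auto simp: SB_def unbar_def length_Suc_conv)
qed

lemma sum_ban: "(\<Sum>w\<in>{w\<in>banners (Suc n). set (unbar w) \<subseteq> {1..m}}. t ^ bars w) = (\<Sum>a=1..m. Bb t m n a)"
  unfolding ban_UN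
  apply (subst sum.UNION_disjoint)
  apply (simp_all add: fin_SB sum_SB)
  apply (auto simp: SB_def)
  done

theorem mainTheorem17:
  fixes m n :: nat and t :: "'a :: comm_ring_1"
  assumes "m \<ge> 1" and "n \<ge> 1"
  shows "(\<Sum>w\<in>{w\<in>banners n. set (unbar w) \<subseteq> {1..m}}. t ^ bars w)
       = (\<Sum>k=0..n-1. of_nat (n - 1 choose k) * t ^ k * (\<Sum>u\<in>words m (n - k). t ^ des u))"
proof -
  obtain N where n: "n = Suc N" using assms(2) by (cases n) auto
  have "(\<Sum>k=0..n-1. of_nat (n - 1 choose k) * t ^ k * (\<Sum>u\<in>words m (n - k). t ^ des u))
      = (\<Sum>k\<le>N. of_nat (N choose k) * t ^ k * (\<Sum>a=1..m. Dd t m (N - k) a))"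
    unfolding n by (intro sum.cong) (auto simp: Suc_diff_le sum_words)
  also have "\<dots> = (\<Sum>a=1..m. \<Sum>k\<le>N. of_nat (N choose k) * t ^ k * Dd t m (N - k) a)"
    by (simp add: sum_distrib_left sum.swap[of _ "{..N}"])
  also have "\<dots> = (\<Sum>a=1..m. Bb t m N a)" by (simp add: Bb_Dd)
  finally show ?thesis unfolding n sum_ban by simp
qed

end
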